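(* Let $(F_S,\iota)$ be an embedded local étale algebra and let $\Gamma\subseteq\mathrm{PGL}_2(F_S)$ be a subgroup whose set of limit points $\mathcal L^S_\Gamma\subseteq\mathbb P^1(\mathbf C_S)$ is empty. Then $\Gamma$ is finite.
   Context: Fix a prime $p$ and let $\mathbf{C}$ be the completion of an algebraic closure of $\mathbb{Q}_p$ or of $\mathbb{F}_p((T))$. An embedded local étale algebra $(F_S,\iota)$ consists of a finite non-empty set $S$, non-Archimedean local fields $F_\mathfrak p$ ($\mathfrak p\in S$) of residue characteristic $p$ and of the same characteristic as $\mathbf C$, and field embeddings $\iota_\mathfrak p\colon F_\mathfrak p\hookrightarrow\mathbf C$; $F_S=\prod_\mathfrak pF_\mathfrak p$. The group $\mathrm{PGL}_2(F_S)=\prod_\mathfrak p\mathrm{PGL}_2(F_\mathfrak p)$ acts componentwise via $\iota$ by Möbius transformations on $\mathbb P^1(\mathbf C_S):=\prod_{\mathfrak p\in S}\mathbb P^1(\mathbf C)$ (product topology). For a subgroup $\Gamma\subseteq\mathrm{PGL}_2(F_S)$, $\mathcal L^S_\Gamma$ is the set of $x\in\mathbb P^1(\mathbf C_S)$ such that there exist $y\in\mathbb P^1(\mathbf C_S)$ and pairwise distinct elements $\gamma_j\in\Gamma$ ($j\ge1$) with $\gamma_j(y)\to x$. *)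

theory Defs
  imports "HOL-Computational_Algebra.Polynomial" "HOL-Algebra.Group"
begin

definition nonarch_absv :: "('c::field \<Rightarrow> real) \<Rightarrow> bool" where
  "nonarch_absv absv \<longleftrightarrow>
     (\<forall>x. 0 \<le> absv x) \<and> (\<forall>x. absv x = 0 \<longleftrightarrow> x = 0) \<and>
     (\<forall>x y. absv (x * y) = absv x * absv y) \<and>
     (\<forall>x y. absv (x + y) \<le> max (absv x) (absv y))"

definition absv_tendsto :: "('c::field \<Rightarrow> real) \<Rightarrow> (nat \<Rightarrow> 'c) \<Rightarrow> 'c \<Rightarrow> bool" where
  "absv_tendsto absv X L \<longleftrightarrow> (\<forall>e>0. \<exists>N. \<forall>n\<ge>N. absv (X n - L) < e)"

definition absv_complete :: "('c::field \<Rightarrow> real) \<Rightarrow> bool" where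
  "absv_complete absv \<longleftrightarrow>
     (\<forall>X. (\<forall>e>0. \<exists>N. \<forall>m\<ge>N. \<forall>n\<ge>N. absv (X m - X n) < e) \<longrightarrow> (\<exists>L. absv_tendsto absv X L))"

definition alg_closed_field :: "'c::field itself \<Rightarrow> bool" where
  "alg_closed_field _ \<longleftrightarrow> (\<forall>q :: 'c poly. degree q > 0 \<longrightarrow> (\<exists>x. poly q x = 0))"

definition is_subfield :: "'c::field set \<Rightarrow> bool" where
  "is_subfield K \<longleftrightarrow> 0 \<in> K \<and> 1 \<in> K \<and> (\<forall>x\<in>K. \<forall>y\<in>K. x + y \<in> K \<and> x - y \<in> K \<and> x * y \<in> K)
     \<and> (\<forall>x\<in>K. x \<noteq> 0 \<longrightarrow> inverse x \<in> K)"

text \<open>A non-Archimedean local field sitting (topologically) inside C: a closed subfield,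
  non-discrete (nontrivially valued) and locally compact (its closed unit ball is
  (sequentially) compact).\<close>
definition local_subfield :: "('c::field \<Rightarrow> real) \<Rightarrow> 'c set \<Rightarrow> bool" where
  "local_subfield absv K \<longleftrightarrow> is_subfield K \<and>
     (\<forall>X L. (\<forall>n. X n \<in> K) \<longrightarrow> absv_tendsto absv X L \<longrightarrow> L \<in> K) \<and>
     (\<exists>x\<in>K. 0 < absv x \<and> absv x < 1) \<and>
     (\<forall>X. (\<forall>n. X n \<in> K \<and> absv (X n) \<le> 1) \<longrightarrow>
        (\<exists>(r::nat \<Rightarrow> nat) L. strict_mono r \<and> L \<in> K \<and> absv L \<le> 1 \<and> absv_tendsto absv (X \<circ> r) L))"

definition algebraic_over :: "'c::field set \<Rightarrow> 'c \<Rightarrow> bool" where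
  "algebraic_over K x \<longleftrightarrow> (\<exists>q :: 'c poly. q \<noteq> 0 \<and> (\<forall>i. coeff q i \<in> K) \<and> poly q x = 0)"

text \<open>(C, absv) is (up to isometric isomorphism and rescaling of the absolute value) the
  completion of an algebraic closure of Q_p or of F_p((T)): a complete, algebraically closed,
  non-Archimedean valued field of residue characteristic p, in which the algebraic closure of
  some local field is dense.\<close>
definition is_C_field :: "nat \<Rightarrow> ('c::field \<Rightarrow> real) \<Rightarrow> bool" where
  "is_C_field p absv \<longleftrightarrow> prime p \<and> nonarch_absv absv \<and> absv_complete absv \<and>
     alg_closed_field TYPE('c) \<and> absv (of_nat p) < 1 \<and>
     (\<exists>K0. local_subfield absv K0 \<and>
        (\<forall>x. \<forall>e>0. \<exists>y. algebraic_over K0 y \<and> absv (x - y) < e))"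

text \<open>A point of P^1(C) is Some z (z in C) or None (the point at infinity).\<close>

definition mobius :: "'c::field \<Rightarrow> 'c \<Rightarrow> 'c \<Rightarrow> 'c \<Rightarrow> 'c option \<Rightarrow> 'c option" where
  "mobius a b c d w = (case w of
      None \<Rightarrow> (if c \<noteq> 0 then Some (a / c) else None)
    | Some z \<Rightarrow> (if c * z + d \<noteq> 0 then Some ((a * z + b) / (c * z + d)) else None))"

text \<open>PGL_2(K) acting on P^1(C) (the action is faithful, so we identify an element
  with the transformation it induces).\<close>
definition PGL2 :: "'c::field set \<Rightarrow> ('c option \<Rightarrow> 'c option) set" where
  "PGL2 K = {mobius a b c d | a b c d. a \<in> K \<and> b \<in> K \<and> c \<in> K \<and> d \<in> K \<and> a * d - b * c \<noteq> 0}"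

text \<open>PGL_2(F_S) = product over S; components outside S are the identity.\<close>
definition PGL2S :: "'i set \<Rightarrow> ('i \<Rightarrow> 'c::field set) \<Rightarrow> ('i \<Rightarrow> 'c option \<Rightarrow> 'c option) set" where
  "PGL2S S K = {g. (\<forall>q\<in>S. g q \<in> PGL2 (K q)) \<and> (\<forall>q. q \<notin> S \<longrightarrow> g q = id)}"

definition PGL2S_group :: "'i set \<Rightarrow> ('i \<Rightarrow> 'c::field set) \<Rightarrow> ('i \<Rightarrow> 'c option \<Rightarrow> 'c option) monoid" where
  "PGL2S_group S K = \<lparr>carrier = PGL2S S K, mult = (\<lambda>g h. \<lambda>q. g q \<circ> h q), one = (\<lambda>q. id)\<rparr>"

definition P1S :: "'i set \<Rightarrow> ('i \<Rightarrow> 'c option) set" where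
  "P1S S = {x. \<forall>q. q \<notin> S \<longrightarrow> x q = None}"

definition actS :: "('i \<Rightarrow> 'c option \<Rightarrow> 'c option) \<Rightarrow> ('i \<Rightarrow> 'c option) \<Rightarrow> ('i \<Rightarrow> 'c option)" where
  "actS g x = (\<lambda>q. g q (x q))"

text \<open>Sequential convergence in P^1(C) (topology induced by absv; neighbourhoods of infinity
  are complements of bounded sets).\<close>
definition P1_tendsto :: "('c::field \<Rightarrow> real) \<Rightarrow> (nat \<Rightarrow> 'c option) \<Rightarrow> 'c option \<Rightarrow> bool" where
  "P1_tendsto absv X x = (case x of
      Some z \<Rightarrow> (\<forall>e>0. \<exists>N. \<forall>n\<ge>N. \<exists>w. X n = Some w \<and> absv (w - z) < e)
    | None \<Rightarrow> (\<forall>M. \<exists>N. \<forall>n\<ge>N. X n = None \<or> (\<exists>w. X n = Some w \<and> M < absv w)))"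

definition P1S_tendsto :: "('c::field \<Rightarrow> real) \<Rightarrow> 'i set \<Rightarrow> (nat \<Rightarrow> 'i \<Rightarrow> 'c option) \<Rightarrow> ('i \<Rightarrow> 'c option) \<Rightarrow> bool" where
  "P1S_tendsto absv S X x \<longleftrightarrow> (\<forall>q\<in>S. P1_tendsto absv (\<lambda>n. X n q) (x q))"

definition limit_set :: "('c::field \<Rightarrow> real) \<Rightarrow> 'i set \<Rightarrow> ('i \<Rightarrow> 'c option \<Rightarrow> 'c option) set \<Rightarrow> ('i \<Rightarrow> 'c option) set" where
  "limit_set absv S \<Gamma> = {x \<in> P1S S. \<exists>y \<in> P1S S. \<exists>\<gamma> :: nat \<Rightarrow> ('i \<Rightarrow> 'c option \<Rightarrow> 'c option).
       inj \<gamma> \<and> (\<forall>j. \<gamma> j \<in> \<Gamma>) \<and> P1S_tendsto absv S (\<lambda>j. actS (\<gamma> j) y) x}"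

end

theory Submission
  imports Defs "HOL-Library.Infinite_Set"
begin

lemma absv_mult:
  assumes "nonarch_absv absv" shows "absv ((x::'c::field) * y) = absv x * absv y"
  using assms unfolding nonarch_absv_def by blast

lemma absv_one:
  assumes "nonarch_absv absv" shows "absv (1::'c::field) = 1"
proof -
  have m: "absv 1 = absv 1 * absv (1::'c)" using absv_mult[OF assms, of 1 1] by simp
  have "absv (1::'c) \<noteq> 0" using assms unfolding nonarch_absv_def by simp
  with m show ?thesis by simp
qed

lemma absv_minus_one:
  assumes "nonarch_absv absv" shows "absv (-1::'c::field) = 1"
proof -
  have h: "absv (-1::'c) * absv (-1) = 1" using absv_mult[OF assms, of "-1" "-1"] absv_one[OF assms]
    by simp
  moreover have "absv (-1::'c) \<ge> 0" using assms unfolding nonarch_absv_def by simp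
  moreover have "\<And>a::real. a * a = 1 \<Longrightarrow> 0 \<le> a \<Longrightarrow> a = 1"
    by (metis abs_of_nonneg abs_square_eq_1 power2_eq_square)
  ultimately show ?thesis by blast
qed

lemma absv_commute:
  assumes "nonarch_absv absv" shows "absv ((a::'c::field) - b) = absv (b - a)"
proof -
  have "a - b = (-1) * (b - a)" by simp
  then have "absv (a - b) = absv (-1) * absv (b - a)" using absv_mult[OF assms, of "-1" "b - a"]
    by simp
  then show ?thesis using absv_minus_one[OF assms] by simp
qed

lemma absv_inverse:
  assumes "nonarch_absv absv" "(x::'c::field) \<noteq> 0" shows "absv (inverse x) = inverse (absv x)"
proof -
  have "absv (inverse x) * absv x = 1" using absv_mult[OF assms(1), of "inverse x" x] absv_one[OF assms(1)] assms(2)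
    by simp
  then show ?thesis by (metis inverse_unique mult.commute)
qed

lemma P1_tendsto_subseq:
  assumes "P1_tendsto absv X L" "strict_mono r"
  shows "P1_tendsto absv (X \<circ> r) L"
proof -
  have rn: "\<And>n. n \<le> r n" using assms(2) by (simp add: seq_suble)
  show ?thesis
  proof (cases L)
    case None
    have "\<exists>N. \<forall>n\<ge>N. X (r n) = None \<or> (\<exists>w. X (r n) = Some w \<and> M < absv w)" for M
    proof -
      have h: "\<forall>M. \<exists>N. \<forall>n\<ge>N. X n = None \<or> (\<exists>w. X n = Some w \<and> M < absv w)"
        using assms(1) None unfolding P1_tendsto_def by simp
      obtain N where N: "\<forall>n\<ge>N. X n = None \<or> (\<exists>w. X n = Some w \<and> M < absv w)"
        using h by blast
      have "\<forall>n\<ge>N. X (r n) = None \<or> (\<exists>w. X (r n) = Some w \<and> M < absv w)"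
      proof (intro allI impI)
        fix n assume "N \<le> n"
        then have "N \<le> r n" using rn[of n] by linarith
        then show "X (r n) = None \<or> (\<exists>w. X (r n) = Some w \<and> M < absv w)" using N by blast
      qed
      then show ?thesis by blast
    qed
    then show ?thesis using None unfolding P1_tendsto_def by simp
  next
    case (Some z)
    have "\<exists>N. \<forall>n\<ge>N. \<exists>w. X (r n) = Some w \<and> absv (w - z) < e" if e: "e > 0" for e
    proof -
      have h: "\<forall>e>0. \<exists>N. \<forall>n\<ge>N. \<exists>w. X n = Some w \<and> absv (w - z) < e"
        using assms(1) Some unfolding P1_tendsto_def by simp
      obtain N where N: "\<forall>n\<ge>N. \<exists>w. X n = Some w \<and> absv (w - z) < e"
        using h e by blast
      have "\<forall>n\<ge>N. \<exists>w. X (r n) = Some w \<and> absv (w - z) < e"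
      proof (intro allI impI)
        fix n assume "N \<le> n"
        then have "N \<le> r n" using rn[of n] by linarith
        then show "\<exists>w. X (r n) = Some w \<and> absv (w - z) < e" using N by blast
      qed
      then show ?thesis by blast
    qed
    then show ?thesis using Some unfolding P1_tendsto_def by simp
  qed
qed

lemma P1_compact:
  fixes X :: "nat \<Rightarrow> 'c::field option"
  assumes na: "nonarch_absv absv" and K: "local_subfield absv K"
    and X: "\<forall>n. X n = None \<or> (\<exists>w. X n = Some w \<and> w \<in> K)"
  shows "\<exists>r L. strict_mono r \<and> P1_tendsto absv (X \<circ> r) L"
proof -
  let ?A = "{n. X n = None}"
  let ?B = "{n. \<exists>w. X n = Some w \<and> w \<in> K \<and> absv w \<le> 1}"
  let ?C = "{n. \<exists>w. X n = Some w \<and> w \<in> K \<and> 1 < absv w}"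
  have cov0: "n \<in> ?A \<union> ?B \<union> ?C" for n
    proof (cases "X n")
      case None then show ?thesis by simp
    next
      case (Some w)
      then have "w \<in> K" using X[rule_format, of n] by simp
      moreover have "absv w \<le> 1 \<or> 1 < absv w" by linarith
      ultimately show ?thesis using Some by blast
    qed
  have cov: "?A \<union> ?B \<union> ?C = UNIV" using cov0 by blast
  have sub: "is_subfield K" using K unfolding local_subfield_def by (elim conjE)
  have cpt0: "\<forall>W. (\<forall>n. W n \<in> K \<and> absv (W n) \<le> 1) \<longrightarrow>
        (\<exists>(r::nat \<Rightarrow> nat) L. strict_mono r \<and> L \<in> K \<and> absv L \<le> 1 \<and> absv_tendsto absv (W \<circ> r) L)"
    using K unfolding local_subfield_def by (elim conjE)
  have cpt: "\<And>W. (\<forall>n. W n \<in> K \<and> absv (W n) \<le> 1) \<Longrightarrow>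
        (\<exists>(r::nat \<Rightarrow> nat) L. strict_mono r \<and> L \<in> K \<and> absv L \<le> 1 \<and> absv_tendsto absv (W \<circ> r) L)"
    using cpt0 by simp
  have nn: "\<And>x. 0 \<le> absv x" using na unfolding nonarch_absv_def by blast
  have z: "\<And>x. absv x = 0 \<longleftrightarrow> x = 0" using na unfolding nonarch_absv_def by blast
  have ml: "\<And>x y. absv (x * y) = absv x * absv y" using na unfolding nonarch_absv_def by blast
  have ul: "\<And>x y. absv (x + y) \<le> max (absv x) (absv y)" using na unfolding nonarch_absv_def by blast
  have "\<not> (finite ?A \<and> finite ?B \<and> finite ?C)"
  proof
    assume "finite ?A \<and> finite ?B \<and> finite ?C"
    then have "finite (?A \<union> ?B \<union> ?C)" by (simp only: finite_Un)
    then have "finite (UNIV::nat set)" using cov by simp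
    then show False by simp
  qed
  then consider "infinite ?A" | "infinite ?B" | "infinite ?C" by blast
  then show ?thesis
  proof cases
    case 1
    obtain r :: "nat \<Rightarrow> nat" where r0: "strict_mono r \<and> (\<forall>n. r n \<in> ?A)" using infinite_enumerate[OF 1] by (elim exE) (rule that)
    then have r: "strict_mono r" "\<forall>n. r n \<in> ?A" by simp_all
    then have "P1_tendsto absv (X \<circ> r) None" unfolding P1_tendsto_def by simp
    then show ?thesis using r by blast
  next
    case 2
    obtain r :: "nat \<Rightarrow> nat" where r0: "strict_mono r \<and> (\<forall>n. r n \<in> ?B)" using infinite_enumerate[OF 2] by (elim exE) (rule that)
    then have r: "strict_mono r" "\<forall>n. r n \<in> ?B" by simp_all
    define W where "W n = the (X (r n))" for n
    have WX: "X (r n) = Some (W n)" and WK: "W n \<in> K \<and> absv (W n) \<le> 1" for n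
    proof -
      obtain w where "X (r n) = Some w" "w \<in> K" "absv w \<le> 1" using r(2) by blast
      then show "X (r n) = Some (W n)" "W n \<in> K \<and> absv (W n) \<le> 1" unfolding W_def by simp_all
    qed
    obtain r2 L where r2: "strict_mono r2" "absv_tendsto absv (W \<circ> r2) L"
      using cpt[of W] WK by blast
    have "P1_tendsto absv (X \<circ> (r \<circ> r2)) (Some L)"
      using r2(2) WX unfolding P1_tendsto_def absv_tendsto_def by auto
    moreover have "strict_mono (r \<circ> r2)" using r r2 by (simp add: strict_mono_o)
    ultimately show ?thesis by blast
  next
    case 3
    obtain r :: "nat \<Rightarrow> nat" where r0: "strict_mono r \<and> (\<forall>n. r n \<in> ?C)" using infinite_enumerate[OF 3] by (elim exE) (rule that)
    then have r: "strict_mono r" "\<forall>n. r n \<in> ?C" by simp_all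
    define V where "V n = the (X (r n))" for n
    define W where "W n = inverse (V n)" for n
    have VX: "X (r n) = Some (V n)" and VK: "V n \<in> K" and V1: "1 < absv (V n)" for n
    proof -
      obtain w where "X (r n) = Some w" "w \<in> K" "1 < absv w" using r(2) by blast
      then show "X (r n) = Some (V n)" "V n \<in> K" "1 < absv (V n)" unfolding V_def by simp_all
    qed
    have a0: "absv 0 = 0" using z[of 0] by simp
    have V0: "V n \<noteq> 0" for n using V1[of n] a0 by auto
    have aW: "absv (W n) = inverse (absv (V n))" for n
      unfolding W_def using absv_inverse[OF na V0] .
    have WK: "W n \<in> K \<and> absv (W n) \<le> 1" for n
      using sub VK[of n] V0[of n] V1[of n] aW[of n] unfolding is_subfield_def W_def
      by (simp add: W_def inverse_le_1_iff)
    obtain r2 L where r2: "strict_mono r2" "absv_tendsto absv (W \<circ> r2) L"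
      using cpt[of W] WK by blast
    have smr: "strict_mono (r \<circ> r2)" using r r2 by (simp add: strict_mono_o)
    show ?thesis
    proof (cases "L = 0")
      case True
      have "P1_tendsto absv (X \<circ> (r \<circ> r2)) None"
        unfolding P1_tendsto_def
      proof (simp, intro allI)
        fix M :: real
        have e: "0 < inverse (\<bar>M\<bar> + 1)" by simp
        have h: "\<forall>e>0. \<exists>N. \<forall>n\<ge>N. absv (W (r2 n)) < e"
          using r2(2) True unfolding absv_tendsto_def comp_def by simp
        obtain N where N: "\<forall>n\<ge>N. absv (W (r2 n)) < inverse (\<bar>M\<bar> + 1)"
          using h e by blast
        have "M < absv (V (r2 n))" if "n \<ge> N" for n
        proof -
          have a: "inverse (absv (V (r2 n))) < inverse (\<bar>M\<bar> + 1)" using N that aW by metis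
          have "0 < absv (V (r2 n))" using V1[of "r2 n"] by simp
          then have "\<bar>M\<bar> + 1 < absv (V (r2 n))" using a
            using inverse_less_imp_less by blast
          then show ?thesis by linarith
        qed
        then show "\<exists>N. \<forall>n\<ge>N. X (r (r2 n)) = None \<or> (\<exists>w. X (r (r2 n)) = Some w \<and> M < absv w)"
          using VX by blast
      qed
      then show ?thesis using smr by blast
    next
      case False
      have aL: "0 < absv L" using False z nn by (simp add: order_less_le)
      have "P1_tendsto absv (X \<circ> (r \<circ> r2)) (Some (inverse L))"
        unfolding P1_tendsto_def
      proof (simp, intro allI impI)
        fix e :: real assume e: "0 < e"
        have e': "0 < min (absv L) (e * absv L * absv L)" using e aL by simp
        obtain N where N: "\<forall>n\<ge>N. absv (W (r2 n) - L) < min (absv L) (e * absv L * absv L)"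
          using r2(2) e' unfolding absv_tendsto_def comp_def by blast
        have "absv (V (r2 n) - inverse L) < e" if "n \<ge> N" for n
        proof -
          define w where "w = W (r2 n)"
          define v where "v = V (r2 n)"
          have d1: "absv (w - L) < absv L" and d2: "absv (w - L) < e * absv L * absv L"
            using N that unfolding w_def by auto
          have "absv L \<le> max (absv (L - w)) (absv w)" using ul[of "L - w" w] by simp
          moreover have "absv (L - w) = absv (w - L)" using absv_commute[OF na] .
          ultimately have wL: "absv L \<le> absv w" using d1 by linarith
          have v0: "v \<noteq> 0" unfolding v_def using V0 .
          have wv: "w = inverse v" unfolding w_def v_def W_def by simp
          have "v - inverse L = v * (L - w) * inverse L" using v0 False wv
            by (simp add: field_simps)
          then have "absv (v - inverse L) = absv v * absv (w - L) * inverse (absv L)"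
            using ml absv_inverse[OF na False] absv_commute[OF na, of L w] by simp
          also have "absv v = inverse (absv w)" using aW[of "r2 n"] unfolding v_def w_def
            using V0 z by (simp add: nonzero_inverse_inverse_eq)
          finally have eq: "absv (v - inverse L) = absv (w - L) / (absv w * absv L)"
            by (simp add: field_simps)
          have "absv L * absv L \<le> absv w * absv L" using wL aL by (simp add: mult_right_mono)
          moreover have "absv (w - L) < e * (absv L * absv L)" using d2 by (simp add: mult.assoc)
          ultimately have "absv (w - L) < e * (absv w * absv L)"
            using e by (smt (verit) mult_left_mono)
          moreover have "0 < absv w * absv L" using wL aL by simp
          ultimately show ?thesis using eq unfolding v_def by (simp add: divide_less_eq)
        qed
        then show "\<exists>N. \<forall>n\<ge>N. \<exists>w. X (r (r2 n)) = Some w \<and> absv (w - inverse L) < e"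
          using VX by blast
      qed
      then show ?thesis using smr by blast
    qed
  qed
qed

lemma P1S_compact:
  fixes Y :: "nat \<Rightarrow> 'i \<Rightarrow> 'c::field option"
  assumes na: "nonarch_absv absv" and fin: "finite S"
    and K: "\<forall>q\<in>S. local_subfield absv (K q)"
    and Y: "\<forall>q\<in>S. \<forall>n. Y n q = None \<or> (\<exists>w. Y n q = Some w \<and> w \<in> K q)"
  shows "\<exists>r x. strict_mono r \<and> (\<forall>q\<in>S. P1_tendsto absv (\<lambda>n. Y (r n) q) (x q))"
  using fin K Y
proof (induction S rule: finite_induct)
  case empty
  show ?case by (rule exI[of _ id], rule exI[of _ "\<lambda>q. None"], simp add: strict_mono_def)
next
  case (insert q F)
  then obtain r x where r: "strict_mono r" "\<forall>q\<in>F. P1_tendsto absv (\<lambda>n. Y (r n) q) (x q)"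
    by auto
  obtain r2 L where r2: "strict_mono r2" "P1_tendsto absv ((\<lambda>n. Y (r n) q) \<circ> r2) L"
    using P1_compact[OF na, of "K q" "\<lambda>n. Y (r n) q"] insert.prems by auto
  have smr: "strict_mono (r \<circ> r2)" using r r2 by (simp add: strict_mono_o)
  have hq: "\<forall>q'\<in>insert q F. P1_tendsto absv (\<lambda>n. Y ((r \<circ> r2) n) q') ((x(q := L)) q')"
  proof
    fix q' assume "q' \<in> insert q F"
    then show "P1_tendsto absv (\<lambda>n. Y ((r \<circ> r2) n) q') ((x(q := L)) q')"
    proof
      assume "q' = q" then show ?thesis using r2(2) by (simp add: comp_def)
    next
      assume q': "q' \<in> F"
      then have "q' \<noteq> q" using insert.hyps by auto
      then show ?thesis using P1_tendsto_subseq[OF r(2)[rule_format, OF q'] r2(1)]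
        by (simp add: comp_def)
    qed
  qed
  show ?case by (rule exI[of _ "r \<circ> r2"], rule exI[of _ "x(q := L)"], rule conjI[OF smr hq])
qed

theorem proposition2p3:
  fixes p :: nat and absv :: "'c::field \<Rightarrow> real"
    and S :: "'i set" and K :: "'i \<Rightarrow> 'c set"
    and \<Gamma> :: "('i \<Rightarrow> 'c option \<Rightarrow> 'c option) set"
  assumes "is_C_field p absv"
    and "finite S" and "S \<noteq> {}"
    and "\<forall>q\<in>S. local_subfield absv (K q)"
    and "subgroup \<Gamma> (PGL2S_group S K)"
    and "limit_set absv S \<Gamma> = {}"
  shows "finite \<Gamma>"
proof (rule ccontr)
  assume inf: "infinite \<Gamma>"
  have na: "nonarch_absv absv" using assms(1) unfolding is_C_field_def by simp
  obtain g :: "nat \<Rightarrow> _" where g: "inj g" "range g \<subseteq> \<Gamma>"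
    using infinite_countable_subset[OF inf] by blast
  have gP: "g n \<in> PGL2S S K" for n
    using g(2) assms(5) unfolding subgroup_def PGL2S_group_def by auto
  define y :: "'i \<Rightarrow> 'c option" where "y = (\<lambda>q. None)"
  define Y where "Y n = actS (g n) y" for n
  have Y: "\<forall>q\<in>S. \<forall>n. Y n q = None \<or> (\<exists>w. Y n q = Some w \<and> w \<in> K q)"
  proof (intro ballI allI)
    fix q n assume q: "q \<in> S"
    then have "g n q \<in> PGL2 (K q)" using gP[of n] unfolding PGL2S_def by auto
    then obtain a b c d where abcd: "g n q = mobius a b c d" "a \<in> K q" "c \<in> K q"
      unfolding PGL2_def by blast
    have sf: "is_subfield (K q)" using assms(4) q unfolding local_subfield_def by auto
    have "a / c \<in> K q" if "c \<noteq> 0" using sf abcd that unfolding is_subfield_def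
      by (simp add: divide_inverse)
    then show "Y n q = None \<or> (\<exists>w. Y n q = Some w \<and> w \<in> K q)"
      unfolding Y_def actS_def y_def abcd(1) mobius_def by auto
  qed
  obtain r x where r: "strict_mono r" "\<forall>q\<in>S. P1_tendsto absv (\<lambda>n. Y (r n) q) (x q)"
    using P1S_compact[OF na assms(2,4) Y] by blast
  define x' where "x' q = (if q \<in> S then x q else None)" for q
  have "x' \<in> limit_set absv S \<Gamma>"
    unfolding limit_set_def
  proof (simp, intro conjI)
    show "x' \<in> P1S S" unfolding x'_def P1S_def by simp
    have "y \<in> P1S S" unfolding y_def P1S_def by simp
    moreover have "inj (g \<circ> r)" using g(1) r(1) by (simp add: inj_compose strict_mono_imp_inj_on)
    moreover have "\<forall>j. (g \<circ> r) j \<in> \<Gamma>" using g(2) by auto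
    moreover have "P1S_tendsto absv S (\<lambda>j. actS ((g \<circ> r) j) y) x'"
      using r(2) unfolding P1S_tendsto_def x'_def Y_def by simp
    ultimately show "\<exists>y\<in>P1S S. \<exists>\<gamma>. inj \<gamma> \<and> (\<forall>j. \<gamma> j \<in> \<Gamma>) \<and> P1S_tendsto absv S (\<lambda>j. actS (\<gamma> j) y) x'"
      by blast
  qed
  then show False using assms(6) by simp
qed

end
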